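(* Let $n$ and $0<n_1<\cdots<n_d<n$ be integers with $m_1=n_1$, $m_k=n_k-n_{k-1}$ ($2\le k\le d$), $m_{d+1}=n-n_d$, and regard $\mathrm{Flag}(n_1,\dots,n_d;n)=\{(VJ_1V^{\mathsf T},\dots,VJ_{d+1}V^{\mathsf T}):V\in\mathrm{O}(n)\}$ as a submanifold of $(\mathbb{R}^{n\times n})^{d+1}$ with the Frobenius inner product. Let $V(t)$ be a differentiable curve in $\mathrm{O}(n)$, $\Lambda(t)=V(t)^{\mathsf T}\dot V(t)$, with $\Lambda(k,k)(t)\equiv0$ for $k=1,\dots,d+1$, and $c(t)=V(t)(J_1,\dots,J_{d+1})V(t)^{\mathsf T}$. Define \begin{align*} T_1(t)&=V(t)\big(\dot\Lambda J_1-J_1\dot\Lambda,\dots,\dot\Lambda J_{d+1}-J_{d+1}\dot\Lambda\big)V(t)^{\mathsf T},\\ T_2(t)&=V(t)\big(\Lambda^2J_1+J_1\Lambda^2,\dots,\Lambda^2J_{d+1}+J_{d+1}\Lambda^2\big)V(t)^{\mathsf T},\\ T_3(t)&=V(t)\big(\Lambda J_1\Lambda,\dots,\Lambda J_{d+1}\Lambda\big)V(t)^{\mathsf T}, \end{align*} with $\Lambda=\Lambda(t)$. Then (1) $T_1(t)\in\mathbb{T}_{c(t)}\mathrm{Flag}(n_1,\dots,n_d;n)$; (2) the orthogonal projection of $T_2(t)$ onto $\mathbb{T}_{c(t)}\mathrm{Flag}(n_1,\dots,n_d;n)$ is zero; (3) the orthogonal projection of $T_3(t)$ onto $\mathbb{T}_{c(t)}\mathrm{Flag}(n_1,\dots,n_d;n)$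 is zero.
   Context: $J_k=\operatorname{diag}(-I_{m_1},\dots,-I_{m_{k-1}},I_{m_k},-I_{m_{k+1}},\dots,-I_{m_{d+1}})$ for $k=1,\dots,d+1$. $V(X_1,\dots,X_{d+1})V^{\mathsf T}$ denotes $(VX_1V^{\mathsf T},\dots,VX_{d+1}V^{\mathsf T})$. For an $n\times n$ matrix $M$, $M(p,q)$ denotes its $(p,q)$ block in the partition $n=m_1+\cdots+m_{d+1}$. *)

theory Defs
  imports "HOL-Analysis.Analysis"
begin

text \<open>Indices of an n x n matrix range over a finite linearly ordered type 'n with
  CARD('n) = n; the 0-based position of an index in this order is idx_pos.\<close>
definition idx_pos :: "'a::{finite,linorder} \<Rightarrow> nat" where
  "idx_pos i = card {j. j < i}"

definition bnd :: "nat \<Rightarrow> (nat \<Rightarrow> nat) \<Rightarrow> nat \<Rightarrow> nat \<Rightarrow> nat" where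
  "bnd n ns d k = (if k = 0 then 0 else if k \<le> d then ns k else n)"

text \<open>Index i lies in block k (1-based) of the partition n = m_1 + ... + m_(d+1).\<close>
definition in_block :: "(nat \<Rightarrow> nat) \<Rightarrow> nat \<Rightarrow> nat \<Rightarrow> 'n::{finite,linorder} \<Rightarrow> bool" where
  "in_block ns d k i \<longleftrightarrow>
     bnd CARD('n) ns d (k - 1) \<le> idx_pos i \<and> idx_pos i < bnd CARD('n) ns d k"

definition Jmat :: "(nat \<Rightarrow> nat) \<Rightarrow> nat \<Rightarrow> nat \<Rightarrow> real^('n::{finite,linorder})^('n::{finite,linorder})" where
  "Jmat ns d k = (\<chi> i j. if i = j then (if in_block ns d k i then 1 else -1) else 0)"

text \<open>(d+1)-tuples of matrices are indexed by a finite linear order 'k with CARD('k) = d+1;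
  its element at position p (0-based) is the (p+1)-th component. The type
  real^'n^'n^'k carries the Frobenius inner product (sum of entrywise products).\<close>
definition Jtup :: "(nat \<Rightarrow> nat) \<Rightarrow> nat \<Rightarrow> real^('n::{finite,linorder})^('n::{finite,linorder})^('k::{finite,linorder})" where
  "Jtup ns d = (\<chi> k. Jmat ns d (idx_pos k + 1))"

definition conj_tup :: "real^'n^'n \<Rightarrow> real^'n^'n^'k \<Rightarrow> real^'n^'n^'k" where
  "conj_tup V X = (\<chi> k. V ** (X $ k) ** transpose V)"

definition flag_manifold ::
  "(nat \<Rightarrow> nat) \<Rightarrow> nat \<Rightarrow> (real^('n::{finite,linorder})^('n::{finite,linorder})^('k::{finite,linorder})) set" where
  "flag_manifold ns d = {conj_tup V (Jtup ns d) | V. orthogonal_matrix V}"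

definition tangent_space :: "'a::real_normed_vector set \<Rightarrow> 'a \<Rightarrow> 'a set" where
  "tangent_space S x = {v. \<exists>\<gamma>. \<gamma> 0 = x \<and> (\<forall>t. \<gamma> t \<in> S) \<and> (\<gamma> has_vector_derivative v) (at 0)}"

definition orth_proj :: "'a::real_inner set \<Rightarrow> 'a \<Rightarrow> 'a" where
  "orth_proj T X = (THE p. p \<in> T \<and> (\<forall>u\<in>T. inner (X - p) u = 0))"

end

theory Submission
  imports Defs
begin

lemma idx_pos_lt: "idx_pos (i::'a::{finite,linorder}) < CARD('a)"
  unfolding idx_pos_def by (rule psubset_card_mono) auto

lemma idx_pos_mono: "(i::'a::{finite,linorder}) < j \<Longrightarrow> idx_pos i < idx_pos j"
  unfolding idx_pos_def by (rule psubset_card_mono) auto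

lemma idx_pos_inj: "inj (idx_pos :: 'a::{finite,linorder} \<Rightarrow> nat)"
  by (metis idx_pos_mono injI less_irrefl linorder_neqE)

lemma idx_pos_bij: "bij_betw (idx_pos :: 'a::{finite,linorder} \<Rightarrow> nat) UNIV {..<CARD('a)}"
proof -
  have "idx_pos ` (UNIV::'a set) = {..<CARD('a)}"
    apply (rule card_subset_eq)
    using idx_pos_lt card_image[OF idx_pos_inj] by auto
  thus ?thesis using idx_pos_inj by (simp add: bij_betw_def)
qed

lemma sum_idx_pos: "(\<Sum>k::'a::{finite,linorder}\<in>UNIV. f (idx_pos k)) = (\<Sum>m<CARD('a). f m)"
  using sum.reindex_bij_betw[OF idx_pos_bij, of f] by simp

lemma bnd_mono:
  assumes ns_pos: "0 < ns 1"
    and ns_mono: "\<forall>k. 1 \<le> k \<and> k < d \<longrightarrow> ns k < ns (Suc k)"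
    and ns_lt: "ns d < N" and d: "1 \<le> d"
  shows "a < b \<Longrightarrow> b \<le> Suc d \<Longrightarrow> bnd N ns d a < bnd N ns d b"
proof (induction b)
  case 0 then show ?case by simp
next
  case (Suc b)
  have step: "bnd N ns d b < bnd N ns d (Suc b)"
  proof (cases "b = 0")
    case True then show ?thesis using ns_pos d by (simp add: bnd_def)
  next
    case False
    show ?thesis
    proof (cases "Suc b \<le> d")
      case True then show ?thesis using False ns_mono by (simp add: bnd_def)
    next
      case False
      then have "b = d" using Suc.prems by simp
      then show ?thesis using ns_lt d by (simp add: bnd_def)
    qed
  qed
  show ?case
  proof (cases "a = b")
    case True then show ?thesis using step by simp
  next
    case False then show ?thesis using Suc step by simp
  qed
qed

lemma block_unique:
  assumes ns_pos: "0 < ns 1"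
    and ns_mono: "\<forall>k. 1 \<le> k \<and> k < d \<longrightarrow> ns k < ns (Suc k)"
    and ns_lt: "ns d < N" and d: "1 \<le> d" and p: "p < N"
  shows "card {m\<in>{1..Suc d}. bnd N ns d (m - 1) \<le> p \<and> p < bnd N ns d m} = 1"
proof -
  note mono = bnd_mono[OF ns_pos ns_mono ns_lt d]
  define m0 where "m0 = (LEAST m. p < bnd N ns d m)"
  have ex: "p < bnd N ns d (Suc d)" using p by (simp add: bnd_def)
  have m0: "p < bnd N ns d m0" unfolding m0_def by (rule LeastI, rule ex)
  have m0le: "m0 \<le> Suc d" unfolding m0_def by (rule Least_le, rule ex)
  have m0pos: "m0 \<noteq> 0" using m0 by (cases "m0 = 0") (auto simp: bnd_def)
  have m0prev: "bnd N ns d (m0 - 1) \<le> p"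
  proof (rule ccontr)
    assume "\<not> ?thesis"
    then have "p < bnd N ns d (m0 - 1)" by simp
    then have "m0 \<le> m0 - 1" unfolding m0_def by (rule Least_le)
    then show False using m0pos by simp
  qed
  have "{m\<in>{1..Suc d}. bnd N ns d (m - 1) \<le> p \<and> p < bnd N ns d m} = {m0}"
  proof (safe)
    fix m assume m: "m \<in> {1..Suc d}" "bnd N ns d (m - 1) \<le> p" "p < bnd N ns d m"
    show "m = m0"
    proof (rule ccontr)
      assume "m \<noteq> m0"
      then consider "m < m0" | "m0 < m" by linarith
      then show False
      proof cases
        case 1
        then have le: "m \<le> m0 - 1" by simp
        have "bnd N ns d m \<le> bnd N ns d (m0 - 1)"
        proof (cases "m = m0 - 1")
          case False
          then have "m < m0 - 1" using le by simp
          then show ?thesis using mono[of m "m0 - 1"] m0le by (auto intro: less_imp_le)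
        qed simp
        then show False using m m0prev by simp
      next
        case 2
        then have le: "m0 \<le> m - 1" by simp
        have "bnd N ns d m0 \<le> bnd N ns d (m - 1)"
        proof (cases "m0 = m - 1")
          case False
          then have "m0 < m - 1" using le by simp
          then show ?thesis using mono[of m0 "m - 1"] m(1) by (auto intro: less_imp_le)
        qed simp
        then show False using m m0 by simp
      qed
    qed
  qed (use m0pos m0le m0 m0prev in auto)
  then show ?thesis by simp
qed

lemma diag_mult: "((\<chi> i j. if i = j then a i else 0) ** (\<chi> i j. if i = j then b i else 0) :: real^'n^'n) = (\<chi> i j. if i = j then a i * b i else 0)"
proof -
  have "(\<Sum>k\<in>UNIV. (if i = k then a i else 0) * (if k = j then b k else 0)) = (if i = j then a i * b i else (0::real))" for i j :: 'n
  proof -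
    have "(\<Sum>k\<in>UNIV. (if i = k then a i else 0) * (if k = j then b k else 0)) = (\<Sum>k\<in>UNIV. if k = i then a i * (if i = j then b i else 0) else (0::real))"
      by (rule sum.cong) auto
    also have "\<dots> = (if i = j then a i * b i else 0)" by simp
    finally show ?thesis .
  qed
  then show ?thesis by (simp add: matrix_matrix_mult_def vec_eq_iff)
qed
lemma Jmat_diag: "Jmat ns d m = (\<chi> i j. if i = j then (if in_block ns d m i then 1 else -1) else 0)"
  by (simp add: Jmat_def)
lemma Jmat_sq: "Jmat ns d m ** Jmat ns d m = (mat 1 :: real^('n::{finite,linorder})^('n::{finite,linorder}))"
  unfolding Jmat_diag diag_mult by (simp add: mat_def vec_eq_iff)
lemma diag_left: "(((\<chi> i j. if i = j then a i else 0) :: real^'n^'n) ** L) $ i $ j = a i * L $ i $ j"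
proof -
  have "(\<Sum>k\<in>UNIV. (if i = k then a i else 0) * L $ k $ j) = (\<Sum>k\<in>UNIV. if k = i then a i * L $ i $ j else (0::real))"
    by (rule sum.cong) auto
  then show ?thesis by (simp add: matrix_matrix_mult_def)
qed
lemma diag_right: "((L :: real^'n^'m) ** ((\<chi> i j. if i = j then a i else 0) :: real^'n^'n)) $ i $ j = L $ i $ j * a j"
proof -
  have "(\<Sum>k\<in>UNIV. L $ i $ k * (if k = j then a k else 0)) = (\<Sum>k\<in>UNIV. if k = j then L $ i $ j * a j else (0::real))"
    by (rule sum.cong) auto
  then show ?thesis by (simp add: matrix_matrix_mult_def)
qed

lemma Jmat_T: "transpose (Jmat ns d m) = (Jmat ns d m :: real^('n::{finite,linorder})^('n::{finite,linorder}))"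
  by (simp add: Jmat_def transpose_def vec_eq_iff)

lemma sum_vec_nth2: "(sum f S :: real^'n^'m) $ i $ j = sum (\<lambda>x. f x $ i $ j) S"
  by (simp add: sum_component)

lemma sum_pm: "finite S \<Longrightarrow> (\<Sum>m\<in>S. if P m then 1 else (-1::real)) = 2 * real (card {m\<in>S. P m}) - real (card S)"
proof (induction S rule: finite_induct)
  case (insert x F)
  have "{m \<in> insert x F. P m} = (if P x then insert x {m\<in>F. P m} else {m\<in>F. P m})" by auto
  then show ?case using insert by (auto simp: card_insert_if)
qed simp

lemma sum_J:
  assumes ns_pos: "0 < ns 1"
    and ns_mono: "\<forall>k. 1 \<le> k \<and> k < d \<longrightarrow> ns k < ns (Suc k)"
    and ns_lt: "ns d < CARD('n::{finite,linorder})" and d: "1 \<le> d"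
    and card_k: "CARD('k::{finite,linorder}) = Suc d"
  shows "(\<Sum>k\<in>(UNIV::('k::{finite,linorder}) set). (Jtup ns d :: real^('n::{finite,linorder})^('n::{finite,linorder})^('k::{finite,linorder})) $ k) = mat (1 - real d)"
proof -
  have "(\<Sum>k\<in>(UNIV::('k::{finite,linorder}) set). (Jtup ns d :: real^('n::{finite,linorder})^('n::{finite,linorder})^('k::{finite,linorder})) $ k) $ i $ j = mat (1 - real d) $ i $ j" for i j
  proof -
    have "(\<Sum>k\<in>(UNIV::('k::{finite,linorder}) set). (Jtup ns d :: real^('n::{finite,linorder})^('n::{finite,linorder})^('k::{finite,linorder})) $ k) $ i $ j
        = (\<Sum>k\<in>(UNIV::('k::{finite,linorder}) set). (Jmat ns d (idx_pos k + 1) :: real^('n::{finite,linorder})^('n::{finite,linorder})) $ i $ j)"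
      by (simp add: sum_vec_nth2 Jtup_def)
    also have "\<dots> = (\<Sum>m<Suc d. (Jmat ns d (m + 1) :: real^('n::{finite,linorder})^('n::{finite,linorder})) $ i $ j)"
      using sum_idx_pos[where 'a='k, of "\<lambda>m. (Jmat ns d (m + 1) :: real^('n::{finite,linorder})^('n::{finite,linorder})) $ i $ j"] card_k by simp
    also have "\<dots> = (\<Sum>m\<in>{1..Suc d}. (Jmat ns d m :: real^('n::{finite,linorder})^('n::{finite,linorder})) $ i $ j)"
      by (rule sum.reindex_bij_witness[of _ "\<lambda>m. m - 1" "Suc"]) auto
    also have "\<dots> = mat (1 - real d) $ i $ j"
    proof (cases "i = j")
      case True
      have "(\<Sum>m\<in>{1..Suc d}. (Jmat ns d m :: real^('n::{finite,linorder})^('n::{finite,linorder})) $ i $ j)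
          = (\<Sum>m\<in>{1..Suc d}. if bnd CARD('n) ns d (m - 1) \<le> idx_pos i \<and> idx_pos i < bnd CARD('n) ns d m then 1 else -1)"
        using True by (simp add: Jmat_def in_block_def)
      also have "\<dots> = 2 * real (card {m\<in>{1..Suc d}. bnd CARD('n) ns d (m - 1) \<le> idx_pos i \<and> idx_pos i < bnd CARD('n) ns d m}) - real (card {1..Suc d})"
        by (rule sum_pm) simp
      also have "\<dots> = 1 - real d"
        using block_unique[OF ns_pos ns_mono ns_lt d idx_pos_lt[of i]] by simp
      finally show ?thesis using True by (simp add: mat_def)
    qed (simp add: Jmat_def mat_def)
    finally show ?thesis .
  qed
  then show ?thesis by (simp add: vec_eq_iff)
qed

definition Pm :: "(nat \<Rightarrow> nat) \<Rightarrow> nat \<Rightarrow> nat \<Rightarrow> real^('n::{finite,linorder})^('n::{finite,linorder})" where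
  "Pm ns d k = (\<chi> i j. if i = j \<and> in_block ns d k i then 1 else 0)"

lemma Jmat_Pm: "Jmat ns d k = 2 *\<^sub>R Pm ns d k - mat 1"
  by (simp add: Jmat_def Pm_def mat_def vec_eq_iff)

lemma PLP: "(Pm ns d k ** L ** Pm ns d k) $ i $ j = (if in_block ns d k i \<and> in_block ns d k j then L $ i $ j else 0)"
proof -
  have e: "Pm ns d k = (\<chi> i j. if i = j then (if in_block ns d k i then 1 else 0) else 0)"
    by (simp add: Pm_def vec_eq_iff)
  show ?thesis unfolding e diag_right diag_left by simp
qed

lemma mm_radd: "((A::real^'n^'m) + B) ** C = A ** C + B ** C"
  by (vector matrix_matrix_mult_def sum.distrib[symmetric] field_simps)
lemma mm_rdiff: "((A::real^'n^'m) - B) ** C = A ** C - B ** C"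
  by (vector matrix_matrix_mult_def sum_subtractf[symmetric] field_simps)
lemma mm_ldiff: "(A::real^'n^'m) ** (B - C) = A ** B - A ** C"
  by (vector matrix_matrix_mult_def sum_subtractf[symmetric] field_simps)
lemma mm_lneg: "(- (A::real^'n^'m)) ** B = - (A ** B)"
  by (vector matrix_matrix_mult_def sum_negf[symmetric])
lemma mm_rneg: "(A::real^'n^'m) ** (- B) = - (A ** B)"
  by (vector matrix_matrix_mult_def sum_negf[symmetric])
lemma transpose_add: "transpose ((A::real^'n^'m) + B) = transpose A + transpose B"
  by (vector transpose_def)
lemma transpose_diff: "transpose ((A::real^'n^'m) - B) = transpose A - transpose B"
  by (vector transpose_def)
lemma transpose_neg: "transpose (- (A::real^'n^'m)) = - transpose A"
  by (vector transpose_def)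

lemma bb_mm: "bounded_bilinear ((**) :: real^'n^'m \<Rightarrow> real^'p^'n \<Rightarrow> real^'p^'m)"
  unfolding bilinear_conv_bounded_bilinear[symmetric] bilinear_def
  by (auto intro!: linearI simp: matrix_add_ldistrib mm_radd scalar_matrix_assoc matrix_scalar_ac)

lemma bl_transpose: "bounded_linear (transpose :: real^'n^'m \<Rightarrow> real^'m^'n)"
  by (rule linear_conv_bounded_linear[THEN iffD1]) (auto intro!: linearI simp: transpose_add transpose_scalar)

lemma inner_tr: "inner (X::real^'n^'m) Y = trace (transpose X ** Y)"
proof -
  have "trace (transpose X ** Y) = (\<Sum>i\<in>UNIV. \<Sum>k\<in>UNIV. X$k$i * Y$k$i)"
    by (simp add: trace_def matrix_matrix_mult_def transpose_def)
  also have "\<dots> = (\<Sum>k\<in>UNIV. \<Sum>i\<in>UNIV. X$k$i * Y$k$i)" by (rule sum.swap)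
  finally show ?thesis by (simp add: inner_vec_def)
qed

lemma trace_scaleR: "trace (c *\<^sub>R (A::real^'n^'n)) = c * trace A"
  by (simp add: trace_def sum_distrib_left)
lemma trace_neg: "trace (- (A::real^'n^'n)) = - trace A"
  by (simp add: trace_def sum_negf)

lemma inner_conj: "inner ((V::real^'n^'n) ** X ** transpose V) Y = inner X (transpose V ** Y ** V)"
proof -
  have "inner (V ** X ** transpose V) Y = trace (V ** (transpose X ** transpose V ** Y))"
    by (simp add: inner_tr matrix_transpose_mul matrix_mul_assoc)
  also have "\<dots> = trace ((transpose X ** transpose V ** Y) ** V)" by (rule trace_mul_sym)
  also have "\<dots> = inner X (transpose V ** Y ** V)"
    by (simp add: inner_tr matrix_mul_assoc)
  finally show ?thesis .
qed

lemma orth_proj_zero: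
  assumes "0 \<in> T" "\<forall>u\<in>T. inner X u = 0"
  shows "orth_proj T X = 0"
  unfolding orth_proj_def
proof (rule the_equality)
  show "0 \<in> T \<and> (\<forall>u\<in>T. inner (X - 0) u = 0)" using assms by simp
  fix p assume p: "p \<in> T \<and> (\<forall>u\<in>T. inner (X - p) u = 0)"
  then have "inner (X - p) p = 0" by blast
  moreover have "inner X p = 0" using p assms by blast
  ultimately have "inner p p = 0" by (simp add: inner_diff_left)
  then show "p = 0" by simp
qed

lemma sum_conj: "finite S \<Longrightarrow> (\<Sum>k\<in>S. (A::real^'n^'m) ** (X k :: real^'n^'n) ** B) = A ** (\<Sum>k\<in>S. X k) ** (B::real^'p^'n)"
  by (induction S rule: finite_induct) (simp_all add: matrix_add_ldistrib mm_radd)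

lemma mat_scale: "(mat c :: real^'n^'n) = c *\<^sub>R mat 1"
  by (simp add: mat_def vec_eq_iff)

lemma orth_TT: "orthogonal_matrix (W::real^'n^'n) \<Longrightarrow> transpose W ** W = mat 1 \<and> W ** transpose W = mat 1"
  by (simp add: orthogonal_matrix_def)

lemma tangent_props:
  assumes ns_pos: "0 < ns 1"
    and ns_mono: "\<forall>k. 1 \<le> k \<and> k < d \<longrightarrow> ns k < ns (Suc k)"
    and ns_lt: "ns d < CARD('n::{finite,linorder})" and d: "1 \<le> d"
    and card_k: "CARD('k::{finite,linorder}) = Suc d"
    and u: "u \<in> tangent_space (flag_manifold ns d :: (real^('n::{finite,linorder})^('n::{finite,linorder})^('k::{finite,linorder})) set) c"
  shows "\<forall>k. c$k ** u$k + u$k ** c$k = 0" "(\<Sum>k\<in>UNIV. u$k) = 0"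
proof -
  obtain \<gamma> where g0: "\<gamma> 0 = c" and gS: "\<forall>t. \<gamma> t \<in> flag_manifold ns d"
    and gd: "(\<gamma> has_vector_derivative u) (at 0)"
    using u unfolding tangent_space_def by blast
  have W: "\<exists>W. orthogonal_matrix W \<and> \<gamma> s = conj_tup W (Jtup ns d)" for s
    using gS unfolding flag_manifold_def by blast
  have sq: "\<gamma> s $ k ** \<gamma> s $ k = mat 1" for s k
  proof -
    obtain W where W: "orthogonal_matrix W" "\<gamma> s = conj_tup W (Jtup ns d)" using W by blast
    have "\<gamma> s $ k ** \<gamma> s $ k = W ** (Jtup ns d $ k ** (transpose W ** W) ** Jtup ns d $ k) ** transpose W"
      using W by (simp add: conj_tup_def matrix_mul_assoc)
    also have "\<dots> = mat 1" using orth_TT[OF W(1)] by (simp add: Jtup_def Jmat_sq)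
    finally show ?thesis .
  qed
  have sm: "(\<Sum>k\<in>UNIV. \<gamma> s $ k) = mat (1 - real d)" for s
  proof -
    obtain W where W: "orthogonal_matrix W" "\<gamma> s = conj_tup W (Jtup ns d)" using W by blast
    have "(\<Sum>k\<in>UNIV. \<gamma> s $ k) = W ** (\<Sum>k\<in>UNIV. (Jtup ns d :: real^('n::{finite,linorder})^('n::{finite,linorder})^('k::{finite,linorder})) $ k) ** transpose W"
      using W(2) sum_conj[of UNIV W "\<lambda>k. Jtup ns d $ k" "transpose W"] by (simp add: conj_tup_def)
    also have "\<dots> = mat (1 - real d)"
      using orth_TT[OF W(1)] sum_J[OF ns_pos ns_mono ns_lt d card_k]
      by (simp add: mat_scale[of "1 - real d"] matrix_scalar_ac scalar_matrix_assoc[symmetric])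
    finally show ?thesis .
  qed
  show "\<forall>k. c$k ** u$k + u$k ** c$k = 0"
  proof
    fix k
    have dk: "((\<lambda>s. \<gamma> s $ k) has_vector_derivative u $ k) (at 0)"
      by (rule bounded_linear.has_vector_derivative[OF bounded_linear_vec_nth gd])
    have "((\<lambda>s. \<gamma> s $ k ** \<gamma> s $ k) has_vector_derivative (\<gamma> 0 $ k ** u $ k + u $ k ** \<gamma> 0 $ k)) (at 0)"
      by (rule bounded_bilinear.has_vector_derivative[OF bb_mm dk dk])
    moreover have "((\<lambda>s. \<gamma> s $ k ** \<gamma> s $ k) has_vector_derivative 0) (at 0)"
      unfolding sq by simp
    ultimately show "c$k ** u$k + u$k ** c$k = 0"
      using vector_derivative_unique_at g0 by blast
  qed
  have "((\<lambda>s. \<Sum>k\<in>UNIV. \<gamma> s $ k) has_vector_derivative (\<Sum>k\<in>UNIV. u $ k)) (at 0)"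
    by (rule has_vector_derivative_sum) (rule bounded_linear.has_vector_derivative[OF bounded_linear_vec_nth gd])
  moreover have "((\<lambda>s. \<Sum>k\<in>UNIV. \<gamma> s $ k) has_vector_derivative 0) (at 0)"
    unfolding sm by simp
  ultimately show "(\<Sum>k\<in>UNIV. u$k) = 0"
    using vector_derivative_unique_at by blast
qed

lemma skew_Lambda:
  fixes V V' :: "real \<Rightarrow> real^'n^'n"
  assumes orth: "\<forall>s. orthogonal_matrix (V s)"
    and dV: "\<forall>s. (V has_vector_derivative V' s) (at s)"
  shows "transpose (transpose (V s) ** V' s) = - (transpose (V s) ** V' s)"
proof -
  have dT: "((\<lambda>r. transpose (V r)) has_vector_derivative transpose (V' s)) (at s)"
    by (rule bounded_linear.has_vector_derivative[OF bl_transpose]) (use dV in blast)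
  have "((\<lambda>r. transpose (V r) ** V r) has_vector_derivative (transpose (V s) ** V' s + transpose (V' s) ** V s)) (at s)"
    by (rule bounded_bilinear.has_vector_derivative[OF bb_mm dT]) (use dV in blast)
  moreover have "((\<lambda>r. transpose (V r) ** V r) has_vector_derivative 0) (at s)"
    using orth by (simp add: orth_TT)
  ultimately have "transpose (V s) ** V' s + transpose (V' s) ** V s = 0"
    using vector_derivative_unique_at by blast
  moreover have "transpose (V' s) ** V s = transpose (transpose (V s) ** V' s)"
    by (simp add: matrix_transpose_mul)
  ultimately have "transpose (V s) ** V' s + transpose (transpose (V s) ** V' s) = 0" by simp
  then show ?thesis by (rule add_eq_0_iff[THEN iffD1])
qed

lemma skew_deriv:
  fixes L L' :: "real \<Rightarrow> real^'n^'n"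
  assumes sk: "\<forall>r. transpose (L r) = - L r"
    and dL: "(L has_vector_derivative L' s) (at s)"
  shows "transpose (L' s) = - L' s"
proof -
  have "((\<lambda>r. transpose (L r)) has_vector_derivative transpose (L' s)) (at s)"
    by (rule bounded_linear.has_vector_derivative[OF bl_transpose dL])
  moreover have "((\<lambda>r. transpose (L r)) has_vector_derivative - L' s) (at s)"
    using sk has_vector_derivative_minus[OF dL] by simp
  ultimately show ?thesis using vector_derivative_unique_at by blast
qed

lemma deriv_at0:
  fixes G :: "real \<Rightarrow> 'a::real_normed_vector"
  assumes "(G \<longlongrightarrow> G0) (at 0)"
  shows "((\<lambda>s. C + s *\<^sub>R G s) has_vector_derivative G0) (at 0)"
  unfolding has_vector_derivative_def has_derivative_at
proof (intro conjI)
  show "bounded_linear (\<lambda>x. x *\<^sub>R G0)" by (rule bounded_linear_scaleR_left)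
  have "((\<lambda>h. norm (G h - G0)) \<longlongrightarrow> 0) (at 0)"
    by (rule tendsto_norm_zero[OF LIM_zero[OF assms]])
  moreover have "\<forall>\<^sub>F h in at 0. norm (G h - G0) = norm (C + (0 + h) *\<^sub>R G (0 + h) - (C + 0 *\<^sub>R G 0) - h *\<^sub>R G0) / norm h"
  proof -
    have "\<forall>\<^sub>F h in at (0::real). h \<noteq> 0" by (simp add: eventually_at_filter)
    then show ?thesis
    proof (rule eventually_mono)
      fix h :: real assume "h \<noteq> 0"
      have "C + (0 + h) *\<^sub>R G (0 + h) - (C + 0 *\<^sub>R G 0) - h *\<^sub>R G0 = h *\<^sub>R (G h - G0)"
        by (simp add: scaleR_diff_right)
      then show "norm (G h - G0) = norm (C + (0 + h) *\<^sub>R G (0 + h) - (C + 0 *\<^sub>R G 0) - h *\<^sub>R G0) / norm h"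
        using \<open>h \<noteq> 0\<close> by simp
    qed
  qed
  ultimately show "((\<lambda>h. norm (C + (0 + h) *\<^sub>R G (0 + h) - (C + 0 *\<^sub>R G 0) - h *\<^sub>R G0) / norm h) \<longlongrightarrow> 0) (at 0)"
    by (rule Lim_transform_eventually)
qed

lemma norm_orth: "orthogonal_matrix (Q::real^'n^'n) \<Longrightarrow> norm Q = sqrt (real CARD('n))"
proof -
  assume "orthogonal_matrix Q"
  then have "inner Q Q = real CARD('n)"
    by (simp add: inner_tr orth_TT trace_I)
  then show ?thesis by (simp add: norm_eq_sqrt_inner)
qed

lemma skew_quad: assumes "transpose (A::real^'n^'n) = - A" shows "inner x (A *v x) = 0"
proof -
  have "inner x (A *v x) = inner (x v* A) x"
    by (rule dot_lmul_matrix[symmetric])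
  also have "x v* A = x v* transpose (transpose A)" by simp
  also have "\<dots> = transpose A *v x" by (rule vector_transpose_matrix)
  also have "\<dots> = - (A *v x)" unfolding assms by (vector matrix_vector_mult_def sum_negf[symmetric])
  finally show ?thesis by (simp add: inner_commute[of x])
qed

lemma comm_1pm: "(mat 1 - X) ** (mat 1 + X) = (mat 1 + X) ** (mat 1 - (X::real^'n^'n))"
proof -
  have "(mat 1 - X) ** (mat 1 + X) = mat 1 - X ** X"
    by (simp add: mm_rdiff matrix_add_ldistrib)
  moreover have "(mat 1 + X) ** (mat 1 - X) = mat 1 - X ** X"
    by (simp add: mm_radd mm_ldiff)
  ultimately show ?thesis by simp
qed

lemma cayley:
  fixes A :: "real^'n^'n"
  assumes skew: "transpose A = - A"
  shows "\<exists>Q. (\<forall>s. orthogonal_matrix (Q s)) \<and> Q 0 = mat 1 \<and> (Q has_vector_derivative A) (at 0)"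
proof -
  define N where "N s = mat 1 - (s/2) *\<^sub>R A" for s :: real
  define P where "P s = mat 1 + (s/2) *\<^sub>R A" for s :: real
  have ker: "\<forall>x. N s *v x = 0 \<longrightarrow> x = 0" for s
  proof (intro allI impI)
    fix x assume "N s *v x = 0"
    then have "x = (s/2) *\<^sub>R (A *v x)"
      by (simp add: N_def algebra_simps scaleR_matrix_vector_assoc)
    then have "inner x x = inner x ((s/2) *\<^sub>R (A *v x))" by simp
    also have "\<dots> = 0" using skew_quad[OF skew] by simp
    finally show "x = 0" by simp
  qed
  have "\<exists>M. M ** N s = mat 1" for s
    using ker matrix_left_invertible_ker by blast
  then obtain M where MLi: "\<And>s. M s ** N s = mat 1" by metis
  have MR: "N s ** M s = mat 1" for s using MLi matrix_left_right_inverse by blast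
  define Q where "Q s = P s ** M s" for s
  have Meq: "M s = mat 1 + (s/2) *\<^sub>R (A ** M s)" for s
  proof -
    have "M s - (s/2) *\<^sub>R (A ** M s) = mat 1"
      using MR[of s] by (simp add: N_def mm_rdiff scalar_matrix_assoc)
    then show ?thesis by (simp add: algebra_simps)
  qed
  have Qeq: "Q s = mat 1 + s *\<^sub>R (A ** M s)" for s
  proof -
    have "Q s = M s + (s/2) *\<^sub>R (A ** M s)"
      by (simp add: Q_def P_def mm_radd scalar_matrix_assoc)
    also have "\<dots> = mat 1 + s *\<^sub>R (A ** M s)"
      using Meq[of s] by (metis (no_types, lifting) add.assoc scaleR_add_left field_sum_of_halves)
    finally show ?thesis .
  qed
  have tP: "transpose (P s) = N s" for s
    by (simp add: P_def N_def transpose_add transpose_scalar skew)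
  have tN: "transpose (N s) = P s" for s by (metis tP transpose_transpose)
  have NP: "N s ** P s = P s ** N s" for s
    unfolding P_def N_def by (rule comm_1pm)
  have orthQ: "orthogonal_matrix (Q s)" for s
  proof -
    have "transpose (Q s) ** Q s = transpose (M s) ** (N s ** P s) ** M s"
      by (simp add: Q_def matrix_transpose_mul tP matrix_mul_assoc)
    also have "\<dots> = transpose (M s) ** P s ** (N s ** M s)"
      by (simp add: NP matrix_mul_assoc)
    also have "\<dots> = transpose (M s) ** transpose (N s)"
      by (simp add: MR tN)
    also have "\<dots> = mat 1"
      by (simp add: matrix_transpose_mul[symmetric] MR)
    finally show ?thesis by (simp add: orthogonal_matrix)
  qed
  have M0: "M 0 = mat 1" using MLi[of 0] by (simp add: N_def)
  have Q0: "Q 0 = mat 1" using Qeq[of 0] by simp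
  obtain K where K: "\<And>a b. norm ((a::real^'n^'n) ** (b::real^'n^'n)) \<le> norm a * norm b * K"
    using bounded_bilinear.bounded[OF bb_mm] by blast
  have Mb: "norm (M s) \<le> sqrt (real CARD('n))" for s
  proof -
    have "2 *\<^sub>R M s = M s + M s" by (rule scaleR_2)
    also have "\<dots> = (mat 1 + (s/2) *\<^sub>R (A ** M s)) + (mat 1 + (s/2) *\<^sub>R (A ** M s))"
      by (rule arg_cong2[where f="(+)"]; rule Meq)
    also have "\<dots> = (mat 1 + ((s/2) *\<^sub>R (A ** M s) + (s/2) *\<^sub>R (A ** M s))) + mat 1"
      by (simp add: add_ac)
    also have "\<dots> = Q s + mat 1"
      by (simp add: Qeq scaleR_add_left[symmetric])
    finally have "M s = (1/2) *\<^sub>R (Q s + mat 1)"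
      by (metis scaleR_scaleR scaleR_one nonzero_divide_eq_eq zero_neq_numeral divide_self_if mult.commute times_divide_eq_left)
    then have "norm (M s) \<le> (1/2) * (norm (Q s) + norm (mat 1 :: real^'n^'n))"
      by (simp add: norm_triangle_ineq)
    also have "\<dots> = sqrt (real CARD('n))"
      using norm_orth[OF orthQ[of s]] norm_orth[OF orthogonal_matrix_id] by simp
    finally show ?thesis .
  qed
  have Mlim: "(M \<longlongrightarrow> mat 1) (at 0)"
  proof -
    have "((\<lambda>s. M s - mat 1) \<longlongrightarrow> 0) (at 0)"
    proof (rule Lim_null_comparison)
      show "\<forall>\<^sub>F s in at 0. norm (M s - mat 1) \<le> \<bar>s\<bar> * (norm A * sqrt (real CARD('n)) * \<bar>K\<bar>)"
      proof (rule always_eventually, rule allI)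
        fix s
        have "norm (M s - mat 1) = \<bar>s/2\<bar> * norm (A ** M s)"
          using Meq[of s] by (metis add_diff_cancel_left' norm_scaleR real_norm_def)
        also have "\<dots> \<le> \<bar>s\<bar> * (norm A * norm (M s) * \<bar>K\<bar>)"
        proof -
          have "norm A * norm (M s) * K \<le> norm A * norm (M s) * \<bar>K\<bar>" by (intro mult_left_mono) auto
          then have k1: "norm (A ** M s) \<le> norm A * norm (M s) * \<bar>K\<bar>" using K[of A "M s"] by linarith
          have "\<bar>s/2\<bar> * norm (A ** M s) \<le> \<bar>s/2\<bar> * (norm A * norm (M s) * \<bar>K\<bar>)"
            by (rule mult_left_mono) (use k1 in auto)
          also have "\<dots> \<le> \<bar>s\<bar> * (norm A * norm (M s) * \<bar>K\<bar>)"
            by (rule mult_right_mono) auto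
          finally show ?thesis .
        qed
        also have "\<dots> \<le> \<bar>s\<bar> * (norm A * sqrt (real CARD('n)) * \<bar>K\<bar>)"
          by (intro mult_left_mono mult_right_mono Mb) auto
        finally show "norm (M s - mat 1) \<le> \<bar>s\<bar> * (norm A * sqrt (real CARD('n)) * \<bar>K\<bar>)" .
      qed
      show "((\<lambda>s. \<bar>s\<bar> * (norm A * sqrt (real CARD('n)) * \<bar>K\<bar>)) \<longlongrightarrow> 0) (at 0)"
        by (auto intro!: tendsto_eq_intros)
    qed
    then show ?thesis by (simp add: Lim_null[symmetric])
  qed
  have "((\<lambda>s. A ** M s) \<longlongrightarrow> A ** mat 1) (at 0)"
    by (rule bounded_bilinear.tendsto[OF bb_mm tendsto_const Mlim])
  then have "((\<lambda>s. mat 1 + s *\<^sub>R (A ** M s)) has_vector_derivative A) (at 0)"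
    using deriv_at0[of "\<lambda>s. A ** M s" A "mat 1"] by simp
  then have "(Q has_vector_derivative A) (at 0)"
  proof -
    have "Q = (\<lambda>s. mat 1 + s *\<^sub>R (A ** M s))" using Qeq by (rule ext)
    then show ?thesis using \<open>((\<lambda>s. mat 1 + s *\<^sub>R (A ** M s)) has_vector_derivative A) (at 0)\<close> by simp
  qed
  then show ?thesis using orthQ Q0 by blast
qed

lemma tr_transpose_skew:
  assumes "transpose (L::real^'n^'n) = - L" "transpose J = J"
  shows "transpose (L ** L ** J + J ** L ** L) = J ** L ** L + L ** L ** J"
    and "transpose (L ** J ** L) = L ** J ** L"
  using assms by (simp_all add: transpose_add matrix_transpose_mul mm_lneg mm_rneg matrix_mul_assoc add.commute)

lemma T2_term:
  fixes L J U :: "real^'n^'n"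
  assumes sk: "transpose L = - L" and sJ: "transpose J = J" and c: "J ** U + U ** J = 0"
  shows "inner (L ** L ** J + J ** L ** L) U = 0"
proof -
  have "inner (L ** L ** J + J ** L ** L) U = trace (J ** (L ** L ** U)) + trace (L ** L ** (J ** U))"
    by (simp add: inner_tr tr_transpose_skew[OF sk sJ] mm_radd trace_add matrix_mul_assoc)
  also have "trace (J ** (L ** L ** U)) = trace (L ** L ** (U ** J))"
    using trace_mul_sym[of J "L ** L ** U"] by (simp add: matrix_mul_assoc)
  also have "trace (L ** L ** (U ** J)) + trace (L ** L ** (J ** U)) = trace (L ** L ** (U ** J + J ** U))"
    by (simp add: matrix_add_ldistrib trace_add)
  also have "U ** J + J ** U = 0" using c by (simp add: add.commute)
  finally show ?thesis by (simp add: trace_0[simplified])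
qed

lemma vec_half: "2 *\<^sub>R X - U + (2 *\<^sub>R Y - U) = (0::'a::real_vector) \<Longrightarrow> U = X + Y"
proof -
  assume h: "2 *\<^sub>R X - U + (2 *\<^sub>R Y - U) = 0"
  have "2 *\<^sub>R U = 2 *\<^sub>R (X + Y)"
  proof -
    have "2 *\<^sub>R (X + Y) - 2 *\<^sub>R U = 2 *\<^sub>R X - U + (2 *\<^sub>R Y - U)"
      by (simp add: scaleR_add_right scaleR_2 algebra_simps)
    then show ?thesis using h by simp
  qed
  then show ?thesis by simp
qed

lemma T3_term:
  fixes L J U P :: "real^'n^'n"
  assumes sk: "transpose L = - L" and sJ: "transpose J = J" and c: "J ** U + U ** J = 0"
    and JP: "J = 2 *\<^sub>R P - mat 1" and PLP: "P ** L ** P = 0"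
  shows "inner (L ** J ** L) U = - trace (L ** L ** U)"
proof -
  have U: "U = P ** U + U ** P"
  proof -
    have e1: "J ** U = 2 *\<^sub>R (P ** U) - U"
      by (simp add: JP mm_rdiff scalar_matrix_assoc[symmetric])
    have e2: "U ** J = 2 *\<^sub>R (U ** P) - U"
      by (simp add: JP mm_ldiff matrix_scalar_ac scalar_matrix_assoc[symmetric])
    have "2 *\<^sub>R (P ** U) - U + (2 *\<^sub>R (U ** P) - U) = 0" using c e1 e2 by simp
    then show ?thesis by (rule vec_half)
  qed
  have z1: "trace (L ** P ** L ** (P ** U)) = 0"
  proof -
    have "L ** P ** L ** (P ** U) = L ** (P ** L ** P) ** U" by (simp add: matrix_mul_assoc)
    then show ?thesis by (simp add: PLP trace_0[simplified])
  qed
  have z2: "trace (L ** P ** L ** (U ** P)) = 0"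
  proof -
    have "trace (L ** P ** L ** (U ** P)) = trace ((L ** P ** L ** U) ** P)" by (simp add: matrix_mul_assoc)
    also have "\<dots> = trace (P ** (L ** P ** L ** U))" by (rule trace_mul_sym)
    also have "P ** (L ** P ** L ** U) = (P ** L ** P) ** (L ** U)" by (simp add: matrix_mul_assoc)
    finally show ?thesis by (simp add: PLP trace_0[simplified])
  qed
  have "trace (L ** P ** L ** U) = 0"
    by (subst U) (simp add: matrix_add_ldistrib trace_add z1 z2)
  moreover have "inner (L ** J ** L) U = trace (L ** J ** L ** U)"
    by (simp add: inner_tr tr_transpose_skew[OF sk sJ])
  moreover have "L ** J ** L ** U = 2 *\<^sub>R (L ** P ** L ** U) - L ** L ** U"
    by (simp add: JP matrix_add_ldistrib mm_ldiff mm_rdiff matrix_scalar_ac scalar_matrix_assoc[symmetric])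
  ultimately show ?thesis by (simp add: trace_sub trace_scaleR)
qed

lemma trace_sum: "finite S \<Longrightarrow> trace (\<Sum>k\<in>S. (X k :: real^'n^'n)) = (\<Sum>k\<in>S. trace (X k))"
  by (induction S rule: finite_induct) (simp_all add: trace_add trace_0[simplified])

lemma mm_sum: "finite S \<Longrightarrow> (\<Sum>k\<in>S. (A::real^'n^'m) ** X k) = A ** (\<Sum>k\<in>S. (X k :: real^'p^'n))"
  by (induction S rule: finite_induct) (simp_all add: matrix_add_ldistrib)

theorem lemma4p5:
  fixes d :: nat and ns :: "nat \<Rightarrow> nat"
    and V V' L' :: "real \<Rightarrow> real^('n::{finite,linorder})^('n::{finite,linorder})"
    and t :: real
  assumes d: "1 \<le> d"
    and ns_pos: "0 < ns 1"
    and ns_mono: "\<forall>k. 1 \<le> k \<and> k < d \<longrightarrow> ns k < ns (Suc k)"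
    and ns_lt: "ns d < CARD('n)"
    and card_k: "CARD('k::{finite,linorder}) = Suc d"
    and orth: "\<forall>s. orthogonal_matrix (V s)"
    and dV: "\<forall>s. (V has_vector_derivative V' s) (at s)"
    and dL: "\<forall>s. ((\<lambda>r. transpose (V r) ** V' r) has_vector_derivative L' s) (at s)"
    and diag0: "\<forall>s k i j. 1 \<le> k \<and> k \<le> Suc d \<and> in_block ns d k i \<and> in_block ns d k j
                  \<longrightarrow> (transpose (V s) ** V' s) $ i $ j = 0"
  shows
    "let \<Lambda> = transpose (V t) ** V' t;
         J = (Jtup ns d :: real^('n::{finite,linorder})^('n::{finite,linorder})^('k::{finite,linorder}));
         c = conj_tup (V t) J;
         TS = tangent_space (flag_manifold ns d :: (real^('n::{finite,linorder})^('n::{finite,linorder})^('k::{finite,linorder})) set) c;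
         T1 = conj_tup (V t) (\<chi> k. L' t ** (J $ k) - (J $ k) ** L' t);
         T2 = conj_tup (V t) (\<chi> k. \<Lambda> ** \<Lambda> ** (J $ k) + (J $ k) ** \<Lambda> ** \<Lambda>);
         T3 = conj_tup (V t) (\<chi> k. \<Lambda> ** (J $ k) ** \<Lambda>)
     in T1 \<in> TS \<and> orth_proj TS T2 = 0 \<and> orth_proj TS T3 = 0"
proof -
  define Lam where "Lam = transpose (V t) ** V' t"
  define J where "J = (Jtup ns d :: real^('n::{finite,linorder})^('n::{finite,linorder})^('k::{finite,linorder}))"
  define c where "c = conj_tup (V t) J"
  define TS where "TS = tangent_space (flag_manifold ns d :: (real^('n::{finite,linorder})^('n::{finite,linorder})^('k::{finite,linorder})) set) c"
  define T1 where "T1 = conj_tup (V t) (\<chi> k. L' t ** (J $ k) - (J $ k) ** L' t)"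
  define T2 where "T2 = conj_tup (V t) (\<chi> k. Lam ** Lam ** (J $ k) + (J $ k) ** Lam ** Lam)"
  define T3 where "T3 = conj_tup (V t) (\<chi> k. Lam ** (J $ k) ** Lam)"
  have orthV: "orthogonal_matrix (V t)" using orth by blast
  have VTV: "transpose (V t) ** V t = mat 1" "V t ** transpose (V t) = mat 1"
    using orth_TT[OF orthV] by auto
  have VTV2: "X ** transpose (V t) ** V t = X" "X ** V t ** transpose (V t) = X" for X :: "real^('n::{finite,linorder})^('n::{finite,linorder})"
    by (simp_all add: matrix_mul_assoc[symmetric] VTV)
  have skL: "transpose Lam = - Lam" unfolding Lam_def by (rule skew_Lambda[OF orth dV])
  have skA: "transpose (L' t) = - L' t"
    by (rule skew_deriv[of "\<lambda>r. transpose (V r) ** V' r" L' t]) (use skew_Lambda[OF orth dV] dL in auto)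
  have sJ: "transpose (J $ k) = J $ k" for k by (simp add: J_def Jtup_def Jmat_T)
  have cflag: "c \<in> flag_manifold ns d" unfolding c_def J_def flag_manifold_def using orthV by blast

  have P1: "T1 \<in> TS"
  proof -
    obtain Q where Qo: "\<forall>s. orthogonal_matrix (Q s)" and Q0: "Q 0 = mat 1"
      and dQ: "(Q has_vector_derivative L' t) (at 0)"
      using cayley[OF skA] by blast
    define G where "G W1 W2 = (\<chi> k. (V t ** W1) ** (J $ k) ** transpose (V t ** W2))"
      for W1 W2 :: "real^('n::{finite,linorder})^('n::{finite,linorder})"
    have bG: "bounded_bilinear G"
      unfolding bilinear_conv_bounded_bilinear[symmetric] bilinear_def G_def
      by (auto intro!: linearI simp: vec_eq_iff matrix_add_ldistrib mm_radd transpose_add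
          scalar_matrix_assoc matrix_scalar_ac transpose_scalar matrix_transpose_mul matrix_mul_assoc)
    have "((\<lambda>s. G (Q s) (Q s)) has_vector_derivative (G (Q 0) (L' t) + G (L' t) (Q 0))) (at 0)"
      by (rule bounded_bilinear.has_vector_derivative[OF bG dQ dQ])
    moreover have "G (Q 0) (L' t) + G (L' t) (Q 0) = T1"
      unfolding G_def T1_def conj_tup_def Q0
      by (simp add: vec_eq_iff matrix_transpose_mul skA mm_lneg mm_rneg mm_rdiff mm_ldiff matrix_mul_assoc)
    moreover have "(\<lambda>s. G (Q s) (Q s)) = (\<lambda>s. conj_tup (V t ** Q s) J)"
      by (simp add: G_def conj_tup_def)
    ultimately have d1: "((\<lambda>s. conj_tup (V t ** Q s) J) has_vector_derivative T1) (at 0)" by simp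
    have "conj_tup (V t ** Q 0) J = c" by (simp add: Q0 c_def)
    moreover have "\<forall>s. conj_tup (V t ** Q s) J \<in> flag_manifold ns d"
      unfolding flag_manifold_def J_def using orthogonal_matrix_mul[OF orthV] Qo by blast
    ultimately show ?thesis unfolding TS_def tangent_space_def using d1
      by (intro CollectI exI[of _ "\<lambda>s. conj_tup (V t ** Q s) J"]) simp
  qed

  have zero_TS: "0 \<in> TS"
    unfolding TS_def tangent_space_def using cflag by (intro CollectI exI[of _ "\<lambda>s. c"]) simp

  have cons: "(\<forall>k. J $ k ** (transpose (V t) ** u $ k ** V t) + (transpose (V t) ** u $ k ** V t) ** J $ k = 0)
      \<and> (\<Sum>k\<in>UNIV. transpose (V t) ** u $ k ** V t) = 0" if u: "u \<in> TS" for u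
  proof -
    have cu: "\<forall>k. c$k ** u$k + u$k ** c$k = 0" and su: "(\<Sum>k\<in>UNIV. u$k) = 0"
      using tangent_props[OF ns_pos ns_mono ns_lt d card_k u[unfolded TS_def]] by auto
    have "J $ k ** (transpose (V t) ** u $ k ** V t) + (transpose (V t) ** u $ k ** V t) ** J $ k = 0" for k
    proof -
      have "J $ k ** (transpose (V t) ** u $ k ** V t) + (transpose (V t) ** u $ k ** V t) ** J $ k
          = transpose (V t) ** (c$k ** u$k + u$k ** c$k) ** V t"
        by (simp add: c_def conj_tup_def matrix_add_ldistrib mm_radd matrix_mul_assoc VTV VTV2)
      then show ?thesis using cu by simp
    qed
    moreover have "(\<Sum>k\<in>UNIV. transpose (V t) ** u $ k ** V t) = 0"
      using sum_conj[of UNIV "transpose (V t)" "\<lambda>k. u $ k" "V t"] su by simp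
    ultimately show ?thesis by blast
  qed

  have P2: "orth_proj TS T2 = 0"
  proof (rule orth_proj_zero[OF zero_TS], intro ballI)
    fix u assume u: "u \<in> TS"
    have "inner T2 u = (\<Sum>k\<in>UNIV. inner (Lam ** Lam ** (J $ k) + (J $ k) ** Lam ** Lam) (transpose (V t) ** u $ k ** V t))"
      by (subst inner_vec_def) (simp add: T2_def conj_tup_def inner_conj)
    also have "\<dots> = 0"
      using cons[OF u] by (simp add: T2_term[OF skL sJ])
    finally show "inner T2 u = 0" .
  qed

  have JP: "J $ k = 2 *\<^sub>R Pm ns d (idx_pos k + 1) - mat 1" for k
    by (simp add: J_def Jtup_def Jmat_Pm)
  have PLP0: "Pm ns d (idx_pos k + 1) ** Lam ** Pm ns d (idx_pos k + 1) = 0" for k :: "'k::{finite,linorder}"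
  proof -
    have "idx_pos k + 1 \<le> Suc d" using idx_pos_lt[of k] card_k by simp
    then show ?thesis
      using diag0[THEN spec[of _ t], THEN spec[of _ "Suc (idx_pos k)"]] by (auto simp: vec_eq_iff PLP Lam_def)
  qed

  have P3: "orth_proj TS T3 = 0"
  proof (rule orth_proj_zero[OF zero_TS], intro ballI)
    fix u assume u: "u \<in> TS"
    have "inner T3 u = (\<Sum>k\<in>UNIV. inner (Lam ** (J $ k) ** Lam) (transpose (V t) ** u $ k ** V t))"
      by (subst inner_vec_def) (simp add: T3_def conj_tup_def inner_conj)
    also have "\<dots> = (\<Sum>k\<in>UNIV. - trace (Lam ** Lam ** (transpose (V t) ** u $ k ** V t)))"
      using cons[OF u] by (intro sum.cong refl T3_term[OF skL sJ _ JP PLP0]) auto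
    also have "\<dots> = - trace (\<Sum>k\<in>UNIV. Lam ** Lam ** (transpose (V t) ** u $ k ** V t))"
      by (simp add: trace_sum sum_negf)
    also have "(\<Sum>k\<in>UNIV. Lam ** Lam ** (transpose (V t) ** u $ k ** V t)) = Lam ** Lam ** (\<Sum>k\<in>UNIV. transpose (V t) ** u $ k ** V t)"
      by (rule mm_sum) simp
    also have "Lam ** Lam ** (\<Sum>k\<in>UNIV. transpose (V t) ** u $ k ** V t) = 0"
      using cons[OF u] by simp
    finally show "inner T3 u = 0" by (simp add: trace_0[simplified])
  qed

  show ?thesis
    unfolding Let_def
    using P1 P2 P3 unfolding TS_def T1_def T2_def T3_def c_def J_def Lam_def by simp
qed

end
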